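(* Let $Q$, $V$, $W$ be independent exponential random variables with rate parameters $\lambda_q,\lambda_v,\lambda_w>0$. Let $\beta_b>0$, $\mathcal{J}_b\ge 0$, $\mathcal{G}_b\ge 0$, $\mathcal{D}_b>0$, $\tilde P_T>0$, $d_{Rb}>0$, $d_{RD}>0$, $\tau>0$, $\sigma_b^2>0$, $\bar P_R>0$, $I_{\text{ITC}}>0$, and let $\psi_j>0$ satisfy $\psi_j<\beta_b/\mathcal{J}_b$ (i.e. $\beta_b-\mathcal{J}_b\psi_j>0$). For $l\in\{\bar P_R,\ I_{\text{ITC}}d_{RD}^{\tau}\}$ define $$\mathcal{S}(l)=\frac{\mathcal{D}_b\tilde P_T\psi_j}{l(\beta_b-\mathcal{J}_b\psi_j)},\qquad \mathcal{O}(l)=\frac{d_{Rb}^{\tau}\sigma_b^2\psi_j}{l(\beta_b-\mathcal{J}_b\psi_j)},$$ and set $\mathcal{S}_\Theta=\mathcal{S}(\bar P_R)$, $\mathcal{O}_\Theta=\mathcal{O}(\bar P_R)$, $\mathcal{S}_\Phi=\mathcal{S}(I_{\text{ITC}}d_{RD}^{\tau})$, $\mathcal{O}_\Phi=\mathcal{O}(I_{\text{ITC}}d_{RD}^{\tau})$, $\mathcal{T}=\frac{\mathcal{G}_b\psi_j}{\beta_b-\mathcal{J}_b\psi_j}$, $\Lambda_R=\frac{I_{\text{ITC}}d_{RD}^{\tau}}{\bar P_R}$, $\mu_R=\lambda_w+\lambda_q\Lambda_R\mathcal{S}_\Phi$ and $\xi_R=\frac{\mathcal{O}_\Phi}{\mathcal{S}_\Phi}+\frac{\lambda_v}{\lambda_q\mathcal{S}_\Phi}$.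 Define $$F_{\gamma_{b,j}}(\psi_j)=\Pr\big[Q<W\mathcal{S}_\Theta+\mathcal{O}_\Theta+\mathcal{T},\ V<\Lambda_R\big]+\Pr\big[Q<WV\mathcal{S}_\Phi+V\mathcal{O}_\Phi+\mathcal{T},\ V>\Lambda_R\big].$$ Then $$F_{\gamma_{b,j}}(\psi_j)=1-\frac{\lambda_w e^{-\lambda_q(\mathcal{O}_\Theta+\mathcal{T})}}{\lambda_w+\lambda_q\mathcal{S}_\Theta}\left(1-e^{-\lambda_v\Lambda_R}\right)+\frac{\lambda_v\lambda_w\,\mathrm{Ei}[-\mu_R\xi_R]}{\lambda_q\mathcal{S}_\Phi}\,e^{-\Lambda_R(\lambda_v+\lambda_q\mathcal{O}_\Phi)-\lambda_q\mathcal{T}+\mu_R\xi_R},$$ where $\mathrm{Ei}$ is the exponential integral function.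
   Context: Interpretation: in an underlay cognitive-radio NOMA relay network, $Q=|h_{Rb}|^2$ (estimated relay–user-$b$ channel gain), $V=|\bar h_{RD}|^2$ (relay–primary-destination channel gain), $W=|\bar h_{Tb}|^2$ (primary-transmitter–user-$b$ channel gain); the relay transmit power is $P_R=\min(\bar P_R, I_{\text{ITC}}d_{RD}^{\tau}/V)$, and $F_{\gamma_{b,j}}(\psi_j)$ is the CDF at threshold $\psi_j$ of the signal-to-interference-distortion-noise ratio with which user $b$ decodes message $x_j$. Here $\beta_b$ is a power-allocation factor, $\mathcal{J}_b$ aggregates residual NOMA/SIC-error interference and hardware distortion, $\mathcal{G}_b$ accounts for channel estimation error, $\mathcal{D}_b\tilde P_T$ scales the primary interference, $I_{\text{ITC}}$ is the interference temperature constraint, $d_{(\cdot)}$ are distances and $\tau$ the path-loss exponent. $\mathrm{Ei}(x)=-\int_{-x}^{\infty}e^{-t}t^{-1}\,dt$. *)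

theory Defs
  imports "HOL-Probability.Probability"
begin

text \<open>Exponential integral for negative arguments:
  Ei x = - integral over (-x, infinity) of exp(-t)/t  (x < 0; Lebesgue integral).\<close>
definition Ei :: "real \<Rightarrow> real" where
  "Ei x = - (LBINT t:{-x<..}. exp (- t) / t)"

end

theory Submission
  imports Defs "HOL-Real_Asymp.Real_Asymp"
begin


lemma joint:
  fixes M :: "'a measure" and Q V W :: "'a \<Rightarrow> real"
  assumes P: "prob_space M"
    and ind: "prob_space.indep_vars M (\<lambda>_. borel) (\<lambda>i::nat. [Q, V, W] ! i) {0, 1, 2}"
    and dQ: "distributed M lborel Q fq"
    and dV: "distributed M lborel V fv"
    and dW: "distributed M lborel W fw"
  shows "distributed M ((lborel \<Otimes>\<^sub>M lborel) \<Otimes>\<^sub>M lborel) (\<lambda>x. ((V x, W x), Q x))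
           (\<lambda>((v,w),q). fv v * fw w * fq q)"
proof -
  interpret prob_space M by fact
  let ?X = "\<lambda>i::nat. [Q, V, W] ! i"
  have i1: "indep_var (PiM {1} (\<lambda>_. borel)) (\<lambda>\<omega>. restrict (\<lambda>i. ?X i \<omega>) {1})
                      (PiM {2} (\<lambda>_. borel)) (\<lambda>\<omega>. restrict (\<lambda>i. ?X i \<omega>) {2})"
    by (rule indep_var_restrict[OF ind]) auto
  have "indep_var lborel ((\<lambda>x. x 1) \<circ> (\<lambda>\<omega>. restrict (\<lambda>i. ?X i \<omega>) {1}))
                  lborel ((\<lambda>x. x 2) \<circ> (\<lambda>\<omega>. restrict (\<lambda>i. ?X i \<omega>) {2}))"
    by (rule indep_var_compose[OF i1]) (auto simp: measurable_lborel2)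
  then have iVW: "indep_var lborel V lborel W"
    by (simp add: comp_def)
  have dVW: "distributed M (lborel \<Otimes>\<^sub>M lborel) (\<lambda>x. (V x, W x)) (\<lambda>(v,w). fv v * fw w)"
    by (rule distributed_joint_indep[OF _ _ dV dW iVW]) (auto intro: lborel.sigma_finite_measure_axioms)
  let ?P12 = "PiM {1::nat,2} (\<lambda>_. borel) :: (nat \<Rightarrow> real) measure"
  let ?P0 = "PiM {0::nat} (\<lambda>_. borel) :: (nat \<Rightarrow> real) measure"
  let ?r12 = "\<lambda>\<omega>. restrict (\<lambda>i. ?X i \<omega>) {1,2}"
  let ?r0 = "\<lambda>\<omega>. restrict (\<lambda>i. ?X i \<omega>) {0}"
  have i2: "indep_var ?P12 ?r12 ?P0 ?r0"
    by (rule indep_var_restrict[OF ind]) auto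
  then have E: "distr M ?P12 ?r12 \<Otimes>\<^sub>M distr M ?P0 ?r0 = distr M (?P12 \<Otimes>\<^sub>M ?P0) (\<lambda>x. (?r12 x, ?r0 x))"
   and rv12: "random_variable ?P12 ?r12" and rv0: "random_variable ?P0 ?r0"
    by (simp_all add: indep_var_distribution_eq)
  have g1: "(\<lambda>x. (x 1, x 2)) \<in> measurable ?P12 (lborel \<Otimes>\<^sub>M lborel :: (real \<times> real) measure)"
    by (auto simp: measurable_lborel2 measurable_pair_iff)
  have g2: "(\<lambda>x. x 0) \<in> measurable ?P0 (lborel :: real measure)"
    by (auto simp: measurable_lborel2)
  let ?g = "\<lambda>(x::nat\<Rightarrow>real,y::nat\<Rightarrow>real). ((x 1, x 2), y 0)"
  have gm: "?g \<in> measurable (?P12 \<Otimes>\<^sub>M ?P0) ((lborel \<Otimes>\<^sub>M lborel) \<Otimes>\<^sub>M lborel)"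
    using g1 g2 by (auto simp: measurable_pair_iff case_prod_beta')
  have "distr M (lborel \<Otimes>\<^sub>M lborel) (\<lambda>x. (V x, W x)) \<Otimes>\<^sub>M distr M lborel Q
      = distr (distr M ?P12 ?r12) (lborel \<Otimes>\<^sub>M lborel) (\<lambda>x. (x 1, x 2)) \<Otimes>\<^sub>M distr (distr M ?P0 ?r0) lborel (\<lambda>x. x 0)"
    by (subst distr_distr[OF g1 rv12], subst distr_distr[OF g2 rv0]) (simp add: comp_def)
  also have "\<dots> = distr (distr M ?P12 ?r12 \<Otimes>\<^sub>M distr M ?P0 ?r0) ((lborel \<Otimes>\<^sub>M lborel) \<Otimes>\<^sub>M lborel) ?g"
  proof (rule pair_measure_distr)
    show "(\<lambda>x. (x 1, x 2)) \<in> distr M ?P12 ?r12 \<rightarrow>\<^sub>M lborel \<Otimes>\<^sub>M lborel" using g1 by simp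
    show g2': "(\<lambda>x. x 0) \<in> distr M ?P0 ?r0 \<rightarrow>\<^sub>M lborel" using g2 by simp
    interpret P: prob_space "distr M ?P0 ?r0" by (rule prob_space_distr[OF rv0])
    show "sigma_finite_measure (distr (distr M ?P0 ?r0) lborel (\<lambda>x. x 0))"
      by (rule prob_space_imp_sigma_finite, rule P.prob_space_distr[OF g2'])
  qed
  also have "\<dots> = distr M ((lborel \<Otimes>\<^sub>M lborel) \<Otimes>\<^sub>M lborel) (\<lambda>x. ((V x, W x), Q x))"
    unfolding E by (subst distr_distr[OF gm], rule measurable_Pair[OF rv12 rv0]) (simp add: comp_def)
  finally have Eq: "distr M (lborel \<Otimes>\<^sub>M lborel) (\<lambda>x. (V x, W x)) \<Otimes>\<^sub>M distr M lborel Q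
      = distr M ((lborel \<Otimes>\<^sub>M lborel) \<Otimes>\<^sub>M lborel) (\<lambda>x. ((V x, W x), Q x))" .
  have "distributed M ((lborel \<Otimes>\<^sub>M lborel) \<Otimes>\<^sub>M lborel) (\<lambda>x. ((V x, W x), Q x))
           (\<lambda>(x,q). (\<lambda>(v,w). fv v * fw w) x * fq q)"
    by (rule distributed_joint_indep'[OF _ _ dVW dQ Eq])
       (auto intro: lborel.sigma_finite_measure_axioms sigma_finite_pair_measure)
  then show ?thesis by (simp add: case_prod_beta')
qed


lemma L1:
  fixes l h :: real assumes l: "l > 0" and h: "h \<ge> 0"
  shows "(\<integral>\<^sup>+q. ennreal (exponential_density l q) * indicator {..<h} q \<partial>lborel) = ennreal (1 - exp (- l * h))"
proof -
  have "(\<integral>\<^sup>+q. ennreal (exponential_density l q) * indicator {..<h} q \<partial>lborel)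
      = (\<integral>\<^sup>+q. ennreal (l * exp (- q * l)) * indicator {0..h} q \<partial>lborel)"
    by (intro nn_integral_cong_AE, use AE_lborel_singleton[of h] in eventually_elim)
       (auto simp: exponential_density_def indicator_def)
  also have "\<dots> = ennreal ((- exp (- h * l)) - (- exp (- 0 * l)))"
  proof (rule nn_integral_has_integral_lebesgue')
    show "\<And>x. x \<in> {0..h} \<Longrightarrow> 0 \<le> l * exp (- x * l)" using l by simp
    show "((\<lambda>q. l * exp (- q * l)) has_integral - exp (- h * l) - - exp (- 0 * l)) {0..h}"
      by (rule fundamental_theorem_of_calculus[OF h])
         (auto intro!: derivative_eq_intros simp: has_real_derivative_iff_has_vector_derivative[symmetric])
  qed
  finally show ?thesis by (simp add: mult.commute)
qed

lemma L1':
  fixes l h :: real assumes l: "l > 0" and h: "h \<ge> 0"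
  shows "(\<integral>\<^sup>+q. ennreal (exponential_density l q) * indicator {h<..} q \<partial>lborel) = ennreal (exp (- l * h))"
proof -
  have "(\<integral>\<^sup>+q. ennreal (exponential_density l q) * indicator {h<..} q \<partial>lborel)
      = (\<integral>\<^sup>+q. ennreal (l * exp (- q * l)) * indicator {h..} q \<partial>lborel)"
    by (intro nn_integral_cong_AE, use AE_lborel_singleton[of h] in eventually_elim)
       (use h in \<open>auto simp: exponential_density_def indicator_def\<close>)
  also have "\<dots> = ennreal (0 - (- exp (- h * l)))"
  proof (rule nn_integral_FTC_atLeast)
    show "((\<lambda>x. - exp (- x * l)) \<longlongrightarrow> 0) at_top" using l by real_asymp
  qed (use l in \<open>auto intro!: derivative_eq_intros\<close>)
  finally show ?thesis by (simp add: mult.commute)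
qed

lemma L2:
  fixes l k a b :: real assumes l: "l > 0" and k: "k > 0" and a: "a \<ge> 0" and b: "b \<ge> 0"
  shows "(\<integral>\<^sup>+w. ennreal (exponential_density l w * (1 - exp (- k * (a * w + b)))) \<partial>lborel)
        = ennreal (1 - l * exp (- k * b) / (l + k * a))"
proof -
  have lka: "l + k * a > 0" using l k a by (simp add: add_pos_nonneg)
  let ?f = "\<lambda>w. l * exp (- w * l) * (1 - exp (- k * (a * w + b)))"
  let ?F = "\<lambda>w. - exp (- w * l) + l * exp (- k * b) / (l + k * a) * exp (- w * (l + k * a))"
  have "(\<integral>\<^sup>+w. ennreal (exponential_density l w * (1 - exp (- k * (a * w + b)))) \<partial>lborel)
      = (\<integral>\<^sup>+w. ennreal (?f w) * indicator {0..} w \<partial>lborel)"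
    by (intro nn_integral_cong) (auto simp: exponential_density_def indicator_def)
  also have "\<dots> = ennreal (0 - ?F 0)"
  proof (rule nn_integral_FTC_atLeast)
    show "?f \<in> borel_measurable borel" by measurable
    have E: "((\<lambda>w. exp (- w * c)) \<longlongrightarrow> 0) at_top" if "c > 0" for c :: real using that by real_asymp
    show "(?F \<longlongrightarrow> 0) at_top"
      using tendsto_add[OF tendsto_minus[OF E[OF l]] tendsto_mult_right_zero[OF E[OF lka], of "l * exp (- k * b) / (l + k * a)"]] by simp
    fix x :: real assume x: "0 \<le> x"
    have "a * x + b \<ge> 0" using a b x by simp
    then have "exp (- k * (a * x + b)) \<le> 1" using k by (simp add: mult_nonneg_nonneg)
    then show "0 \<le> ?f x" using l by simp
    have d: "(?F has_real_derivative (l * exp (- x * l) - l * exp (- k * b) * exp (- x * (l + k * a)))) (at x)"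
      apply (rule derivative_eq_intros refl)+
      using lka by (simp add: field_simps)
    have "exp (- x * l) * exp (- k * (a * x + b)) = exp (- k * b) * exp (- x * (l + k * a))"
      by (simp add: exp_add[symmetric] algebra_simps)
    then have "?f x = l * exp (- x * l) - l * exp (- k * b) * exp (- x * (l + k * a))"
      by (simp add: algebra_simps)
    then show "(?F has_real_derivative ?f x) (at x)" using d by simp
  qed
  finally show ?thesis by simp
qed

lemma L3:
  fixes a c lw \<Lambda> :: real assumes a: "a > 0" and c: "c > 0" and lw: "lw > 0" and L: "\<Lambda> \<ge> 0"
  shows "enn2real (\<integral>\<^sup>+v. ennreal (exp (- a * v) / (lw + c * v)) * indicator {\<Lambda><..} v \<partial>lborel)
       = - Ei (- (a * (\<Lambda> + lw / c))) * exp (a * lw / c) / c"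
proof -
  define x0 where "x0 = a * (\<Lambda> + lw / c)"
  have x0: "x0 > 0" unfolding x0_def using a c lw L by (simp add: add_nonneg_pos)
  define J where "J = (\<integral>\<^sup>+v. ennreal (exp (- a * v) / (lw + c * v)) * indicator {\<Lambda><..} v \<partial>lborel)"
  let ?f = "\<lambda>t. ennreal (indicator {x0<..} t *\<^sub>R (exp (- t) / t))"
  have "(\<integral>\<^sup>+t. ?f t \<partial>lborel) = ennreal \<bar>a\<bar> * (\<integral>\<^sup>+x. ?f (a * lw / c + a * x) \<partial>lborel)"
    by (rule nn_integral_real_affine) (use a in auto)
  also have "(\<integral>\<^sup>+x. ?f (a * lw / c + a * x) \<partial>lborel)
     = (\<integral>\<^sup>+x. ennreal (c * exp (- (a * lw / c)) / a) * (ennreal (exp (- a * x) / (lw + c * x)) * indicator {\<Lambda><..} x) \<partial>lborel)"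
  proof (intro nn_integral_cong)
    fix x :: real
    show "?f (a * lw / c + a * x) = ennreal (c * exp (- (a * lw / c)) / a) * (ennreal (exp (- a * x) / (lw + c * x)) * indicator {\<Lambda><..} x)"
    proof (cases "x > \<Lambda>")
      case True
      then have xp: "lw + c * x > 0" using L c lw by (simp add: add_pos_nonneg)
      have "x0 < a * lw / c + a * x" using True a c unfolding x0_def by (simp add: field_simps)
      moreover have "exp (- (a * lw / c + a * x)) / (a * lw / c + a * x)
          = c * exp (- (a * lw / c)) / a * (exp (- a * x) / (lw + c * x))"
        using a c xp by (simp add: exp_add[symmetric] exp_diff field_simps)
      ultimately show ?thesis using True a c xp
        by (simp add: indicator_def ennreal_mult[symmetric] divide_nonneg_pos)
    next
      case False
      have "\<not> x0 < a * lw / c + a * x" using False a c unfolding x0_def by (simp add: field_simps)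
      then show ?thesis using False by (simp add: indicator_def)
    qed
  qed
  also have "\<dots> = ennreal (c * exp (- (a * lw / c)) / a) * J"
    unfolding J_def by (rule nn_integral_cmult) measurable
  also have "ennreal \<bar>a\<bar> * (ennreal (c * exp (- (a * lw / c)) / a) * J) = ennreal (\<bar>a\<bar> * (c * exp (- (a * lw / c)) / a)) * J"
  proof -
    have "ennreal \<bar>a\<bar> * ennreal (c * exp (- (a * lw / c)) / a) = ennreal (\<bar>a\<bar> * (c * exp (- (a * lw / c)) / a))"
      by (rule ennreal_mult[symmetric]) (use a c in auto)
    then show ?thesis by (metis mult.assoc)
  qed
  also have "\<bar>a\<bar> * (c * exp (- (a * lw / c)) / a) = c * exp (- (a * lw / c))"
    using a by simp
  finally have eq: "(\<integral>\<^sup>+t. ?f t \<partial>lborel) = ennreal (c * exp (- (a * lw / c))) * J" .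
  have "Ei (- x0) = - (LBINT t:{x0<..}. exp (- t) / t)" by (simp add: Ei_def)
  also have "(LBINT t:{x0<..}. exp (- t) / t) = enn2real (\<integral>\<^sup>+t. ?f t \<partial>lborel)"
    unfolding set_lebesgue_integral_def
    by (rule integral_eq_nn_integral) (use x0 in \<open>auto simp: indicator_def\<close>)
  finally have "Ei (- x0) = - (c * exp (- (a * lw / c)) * enn2real J)"
    unfolding eq using c by (simp add: enn2real_mult)
  then have "enn2real J = - Ei (- x0) * exp (a * lw / c) / c"
    using c by (simp add: field_simps exp_minus)
  then show ?thesis unfolding J_def x0_def .
qed



lemma G:
  fixes M :: "'a measure" and X :: "'a \<Rightarrow> (real \<times> real) \<times> real"
  assumes P: "prob_space M"
    and D: "distributed M ((lborel \<Otimes>\<^sub>M lborel) \<Otimes>\<^sub>M lborel) X f"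
    and A: "A \<in> sets ((lborel \<Otimes>\<^sub>M lborel) \<Otimes>\<^sub>M lborel)"
  shows "measure M {\<omega> \<in> space M. X \<omega> \<in> A}
       = enn2real (\<integral>\<^sup>+v. \<integral>\<^sup>+w. \<integral>\<^sup>+q. f ((v,w),q) * indicator A ((v,w),q) \<partial>lborel \<partial>lborel \<partial>lborel)"
proof -
  let ?N = "(lborel \<Otimes>\<^sub>M lborel) \<Otimes>\<^sub>M lborel :: ((real \<times> real) \<times> real) measure"
  have Xm: "X \<in> measurable M ?N" and fm: "f \<in> borel_measurable ?N" and dd: "distr M ?N X = density ?N f"
    using D by (auto simp: distributed_def)
  have gm: "(\<lambda>x. f x * indicator A x) \<in> borel_measurable ?N" using fm A by measurable
  have "{\<omega> \<in> space M. X \<omega> \<in> A} = X -` A \<inter> space M" by auto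
  then have "measure M {\<omega> \<in> space M. X \<omega> \<in> A} = measure (distr M ?N X) A"
    using measure_distr[OF Xm A] by simp
  also have "\<dots> = enn2real (\<integral>\<^sup>+x. f x * indicator A x \<partial>?N)"
    unfolding dd measure_def using emeasure_density[OF fm A] by simp
  also have "(\<integral>\<^sup>+x. f x * indicator A x \<partial>?N) = (\<integral>\<^sup>+y. \<integral>\<^sup>+q. f (y,q) * indicator A (y,q) \<partial>lborel \<partial>(lborel \<Otimes>\<^sub>M lborel))"
    by (rule lborel.nn_integral_fst[symmetric]) (use gm in simp)
  also have "\<dots> = (\<integral>\<^sup>+v. \<integral>\<^sup>+w. \<integral>\<^sup>+q. f ((v,w),q) * indicator A ((v,w),q) \<partial>lborel \<partial>lborel \<partial>lborel)"
    by (rule lborel.nn_integral_fst[symmetric, where f = "\<lambda>y. \<integral>\<^sup>+q. f (y,q) * indicator A (y,q) \<partial>lborel", simplified])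
       (rule lborel.borel_measurable_nn_integral_fst, use gm in simp)
  finally show ?thesis .
qed

lemma setm: fixes a b c L :: real
  shows "{((v,w),q). q < w * a + b \<and> v < L} \<in> sets ((lborel \<Otimes>\<^sub>M lborel) \<Otimes>\<^sub>M lborel)"
    and "{((v,w),q). q < w * v * a + v * b + c \<and> v > L} \<in> sets ((lborel \<Otimes>\<^sub>M lborel) \<Otimes>\<^sub>M lborel)"
proof -
  let ?N = "(lborel \<Otimes>\<^sub>M lborel) \<Otimes>\<^sub>M lborel :: ((real \<times> real) \<times> real) measure"
  have "Measurable.pred ?N (\<lambda>x. snd x < snd (fst x) * a + b \<and> fst (fst x) < L)" by measurable
  then have "{x \<in> space ?N. snd x < snd (fst x) * a + b \<and> fst (fst x) < L} \<in> sets ?N" by (simp add: pred_def)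
  moreover have "{x \<in> space ?N. snd x < snd (fst x) * a + b \<and> fst (fst x) < L} = {((v,w),q). q < w * a + b \<and> v < L}"
    by (auto simp: space_pair_measure)
  ultimately show "{((v,w),q). q < w * a + b \<and> v < L} \<in> sets ?N" by simp
  have "Measurable.pred ?N (\<lambda>x. snd x < snd (fst x) * fst (fst x) * a + fst (fst x) * b + c \<and> fst (fst x) > L)" by measurable
  then have "{x \<in> space ?N. snd x < snd (fst x) * fst (fst x) * a + fst (fst x) * b + c \<and> fst (fst x) > L} \<in> sets ?N" by (simp add: pred_def)
  moreover have "{x \<in> space ?N. snd x < snd (fst x) * fst (fst x) * a + fst (fst x) * b + c \<and> fst (fst x) > L} = {((v,w),q). q < w * v * a + v * b + c \<and> v > L}"
    by (auto simp: space_pair_measure)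
  ultimately show "{((v,w),q). q < w * v * a + v * b + c \<and> v > L} \<in> sets ?N" by simp
qed



lemma Q1:
  fixes lv lw lq a b L v w :: real assumes lq: "lq > 0" and lw: "lw > 0" and a: "a \<ge> 0" and b: "b \<ge> 0"
  shows "(\<integral>\<^sup>+q. ennreal (exponential_density lv v) * ennreal (exponential_density lw w) * ennreal (exponential_density lq q)
            * indicator {((v,w),q). q < w * a + b \<and> v < L} ((v,w),q) \<partial>lborel)
       = ennreal (exponential_density lv v) * indicator {..<L} v * ennreal (exponential_density lw w * (1 - exp (- lq * (a * w + b))))"
proof (cases "w < 0")
  case True
  then show ?thesis by (simp add: exponential_density_def)
next
  case False
  then have h: "a * w + b \<ge> 0" using a b by simp
  have "(\<integral>\<^sup>+q. ennreal (exponential_density lv v) * ennreal (exponential_density lw w) * ennreal (exponential_density lq q)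
            * indicator {((v,w),q). q < w * a + b \<and> v < L} ((v,w),q) \<partial>lborel)
     = (\<integral>\<^sup>+q. (ennreal (exponential_density lv v) * ennreal (exponential_density lw w) * indicator {..<L} v)
            * (ennreal (exponential_density lq q) * indicator {..<a * w + b} q) \<partial>lborel)"
    by (intro nn_integral_cong) (auto simp: indicator_def mult.commute)
  also have "\<dots> = (ennreal (exponential_density lv v) * ennreal (exponential_density lw w) * indicator {..<L} v)
            * ennreal (1 - exp (- lq * (a * w + b)))"
    by (subst nn_integral_cmult) (auto simp: L1[OF lq h])
  also have "\<dots> = ennreal (exponential_density lv v) * indicator {..<L} v * ennreal (exponential_density lw w * (1 - exp (- lq * (a * w + b))))"
    by (subst ennreal_mult'[of "exponential_density lw w"]) (use lw in \<open>auto simp: exponential_density_def mult_ac\<close>)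
  finally show ?thesis .
qed

lemma Q2:
  fixes lv lw lq a b c L v w :: real assumes lq: "lq > 0" and lw: "lw > 0" and a: "a \<ge> 0" and b: "b \<ge> 0" and c: "c \<ge> 0" and L: "L > 0"
  shows "(\<integral>\<^sup>+q. ennreal (exponential_density lv v) * ennreal (exponential_density lw w) * ennreal (exponential_density lq q)
            * indicator {((v,w),q). q < w * v * a + v * b + c \<and> v > L} ((v,w),q) \<partial>lborel)
       = ennreal (exponential_density lv v) * indicator {L<..} v * ennreal (exponential_density lw w * (1 - exp (- lq * ((v * a) * w + (v * b + c)))))"
proof (cases "w < 0 \<or> v \<le> L")
  case True
  then show ?thesis by (auto simp: exponential_density_def indicator_def)
next
  case False
  then have h: "(v * a) * w + (v * b + c) \<ge> 0" using a b c L by simp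
  have "(\<integral>\<^sup>+q. ennreal (exponential_density lv v) * ennreal (exponential_density lw w) * ennreal (exponential_density lq q)
            * indicator {((v,w),q). q < w * v * a + v * b + c \<and> v > L} ((v,w),q) \<partial>lborel)
     = (\<integral>\<^sup>+q. (ennreal (exponential_density lv v) * ennreal (exponential_density lw w) * indicator {L<..} v)
            * (ennreal (exponential_density lq q) * indicator {..<(v * a) * w + (v * b + c)} q) \<partial>lborel)"
    by (intro nn_integral_cong) (auto simp: indicator_def mult_ac)
  also have "\<dots> = (ennreal (exponential_density lv v) * ennreal (exponential_density lw w) * indicator {L<..} v)
            * ennreal (1 - exp (- lq * ((v * a) * w + (v * b + c))))"
    by (subst nn_integral_cmult) (auto simp: L1[OF lq h])
  also have "\<dots> = ennreal (exponential_density lv v) * indicator {L<..} v * ennreal (exponential_density lw w * (1 - exp (- lq * ((v * a) * w + (v * b + c)))))"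
    by (subst ennreal_mult'[of "exponential_density lw w"]) (use lw in \<open>auto simp: exponential_density_def mult_ac\<close>)
  finally show ?thesis .
qed

lemma L2c:
  fixes l k a b :: real and C :: ennreal assumes l: "l > 0" and k: "k > 0" and a: "a \<ge> 0" and b: "b \<ge> 0"
  shows "(\<integral>\<^sup>+w. C * ennreal (exponential_density l w * (1 - exp (- k * (a * w + b)))) \<partial>lborel)
        = C * ennreal (1 - l * exp (- k * b) / (l + k * a))"
  using L2[OF l k a b] by (subst nn_integral_cmult) auto



lemma core:
  fixes M :: "'a measure" and Q V W :: "'a \<Rightarrow> real"
    and lq lv lw ST OT SP OP T L :: real
  assumes P: "prob_space M"
    and ind: "prob_space.indep_vars M (\<lambda>_. borel) (\<lambda>i::nat. [Q, V, W] ! i) {0, 1, 2}"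
    and dQ: "distributed M lborel Q (exponential_density lq)"
    and dV: "distributed M lborel V (exponential_density lv)"
    and dW: "distributed M lborel W (exponential_density lw)"
    and lq: "lq > 0" and lv: "lv > 0" and lw: "lw > 0"
    and ST: "ST > 0" and OT: "OT \<ge> 0" and SP: "SP > 0" and OP: "OP \<ge> 0" and T: "T \<ge> 0" and L: "L > 0"
  shows "measure M {\<omega> \<in> space M. Q \<omega> < W \<omega> * ST + OT + T \<and> V \<omega> < L}
        + measure M {\<omega> \<in> space M. Q \<omega> < W \<omega> * V \<omega> * SP + V \<omega> * OP + T \<and> V \<omega> > L}
       = 1 - lw * exp (- lq * (OT + T)) / (lw + lq * ST) * (1 - exp (- lv * L))
         + lv * lw * Ei (- (lw + lq * L * SP) * (OP / SP + lv / (lq * SP))) / (lq * SP)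
           * exp (- L * (lv + lq * OP) - lq * T + (lw + lq * L * SP) * (OP / SP + lv / (lq * SP)))"
proof -
  let ?e = "exponential_density"
  let ?f = "\<lambda>((v,w),q). ennreal (?e lv v) * ennreal (?e lw w) * ennreal (?e lq q)"
  have D: "distributed M ((lborel \<Otimes>\<^sub>M lborel) \<Otimes>\<^sub>M lborel) (\<lambda>x. ((V x, W x), Q x)) ?f"
    by (rule joint[OF P ind dQ dV dW])
  define A1 where "A1 = {((v,w),q). q < w * ST + (OT + T) \<and> v < L}"
  define A2 where "A2 = {((v,w),q). q < w * v * SP + v * OP + T \<and> v > L}"
  have A1m: "A1 \<in> sets ((lborel \<Otimes>\<^sub>M lborel) \<Otimes>\<^sub>M lborel)" unfolding A1_def by (rule setm(1))
  have A2m: "A2 \<in> sets ((lborel \<Otimes>\<^sub>M lborel) \<Otimes>\<^sub>M lborel)" unfolding A2_def by (rule setm(2))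
  have e1: "{\<omega> \<in> space M. Q \<omega> < W \<omega> * ST + OT + T \<and> V \<omega> < L} = {\<omega> \<in> space M. ((V \<omega>, W \<omega>), Q \<omega>) \<in> A1}"
    by (auto simp: A1_def add.assoc)
  have e2: "{\<omega> \<in> space M. Q \<omega> < W \<omega> * V \<omega> * SP + V \<omega> * OP + T \<and> V \<omega> > L} = {\<omega> \<in> space M. ((V \<omega>, W \<omega>), Q \<omega>) \<in> A2}"
    by (auto simp: A2_def)
  define C1 where "C1 = 1 - lw * exp (- lq * (OT + T)) / (lw + lq * ST)"
  have C1: "C1 \<ge> 0"
  proof -
    have "exp (- lq * (OT + T)) \<le> 1" using lq OT T by simp
    then have "lw * exp (- lq * (OT + T)) \<le> lw" using lw by (simp add: mult_left_le)
    moreover have "lw \<le> lw + lq * ST" using lq ST by simp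
    ultimately have "lw * exp (- lq * (OT + T)) \<le> lw + lq * ST" by linarith
    then show ?thesis unfolding C1_def using lw lq ST by (simp add: divide_le_eq_1 add_pos_pos)
  qed
  have "(\<integral>\<^sup>+v. \<integral>\<^sup>+w. \<integral>\<^sup>+q. ?f ((v,w),q) * indicator A1 ((v,w),q) \<partial>lborel \<partial>lborel \<partial>lborel)
      = (\<integral>\<^sup>+v. \<integral>\<^sup>+w. ennreal (?e lv v) * indicator {..<L} v * ennreal (?e lw w * (1 - exp (- lq * (ST * w + (OT + T))))) \<partial>lborel \<partial>lborel)"
    unfolding A1_def using Q1[OF lq lw less_imp_le[OF ST] add_nonneg_nonneg[OF OT T]]
    by (simp add: mult.commute)
  also have "\<dots> = (\<integral>\<^sup>+v. ennreal (?e lv v) * indicator {..<L} v * ennreal C1 \<partial>lborel)"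
    unfolding C1_def by (subst L2c[OF lw lq less_imp_le[OF ST] add_nonneg_nonneg[OF OT T]]) (rule refl)
  also have "\<dots> = ennreal (1 - exp (- lv * L)) * ennreal C1"
    by (subst nn_integral_multc) (auto simp: L1[OF lv less_imp_le[OF L]])
  finally have P1: "(\<integral>\<^sup>+v. \<integral>\<^sup>+w. \<integral>\<^sup>+q. ?f ((v,w),q) * indicator A1 ((v,w),q) \<partial>lborel \<partial>lborel \<partial>lborel)
      = ennreal (1 - exp (- lv * L)) * ennreal C1" .
  define g where "g v = lw * exp (- lq * (v * OP + T)) / (lw + lq * (v * SP))" for v
  have g: "0 \<le> g v \<and> g v \<le> 1" if "v > L" for v
  proof -
    have vp: "v > 0" using that L by simp
    have "exp (- lq * (v * OP + T)) \<le> 1" using lq OP T vp by simp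
    moreover have "lw + lq * (v * SP) > 0" using lw lq SP vp by (simp add: add_pos_pos)
    moreover have "lw \<le> lw + lq * (v * SP)" using lq SP vp by simp
    moreover have "lw * exp (- lq * (v * OP + T)) \<le> lw"
      using lw \<open>exp (- lq * (v * OP + T)) \<le> 1\<close> by (simp add: mult_left_le)
    ultimately have "lw * exp (- lq * (v * OP + T)) \<le> lw + lq * (v * SP)" "lw + lq * (v * SP) > 0"
      by linarith+
    then show ?thesis unfolding g_def using lw by (simp add: divide_le_eq_1)
  qed
  have "(\<integral>\<^sup>+v. \<integral>\<^sup>+w. \<integral>\<^sup>+q. ?f ((v,w),q) * indicator A2 ((v,w),q) \<partial>lborel \<partial>lborel \<partial>lborel)
      = (\<integral>\<^sup>+v. \<integral>\<^sup>+w. ennreal (?e lv v) * indicator {L<..} v * ennreal (?e lw w * (1 - exp (- lq * ((v * SP) * w + (v * OP + T))))) \<partial>lborel \<partial>lborel)"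
    unfolding A2_def using Q2[OF lq lw less_imp_le[OF SP] OP T L]
    by (simp add: mult.commute)
  also have "\<dots> = (\<integral>\<^sup>+v. ennreal (?e lv v) * indicator {L<..} v * ennreal (1 - g v) \<partial>lborel)"
  proof (intro nn_integral_cong)
    fix v :: real
    show "(\<integral>\<^sup>+w. ennreal (?e lv v) * indicator {L<..} v * ennreal (?e lw w * (1 - exp (- lq * ((v * SP) * w + (v * OP + T))))) \<partial>lborel)
        = ennreal (?e lv v) * indicator {L<..} v * ennreal (1 - g v)"
    proof (cases "v > L")
      case True
      then have "v * SP \<ge> 0" "v * OP + T \<ge> 0" using L SP OP T by auto
      then show ?thesis unfolding g_def by (subst L2c[OF lw lq]) (auto simp: mult_ac)
    next
      case False
      then show ?thesis by simp
    qed
  qed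
  finally have P2: "(\<integral>\<^sup>+v. \<integral>\<^sup>+w. \<integral>\<^sup>+q. ?f ((v,w),q) * indicator A2 ((v,w),q) \<partial>lborel \<partial>lborel \<partial>lborel)
      = (\<integral>\<^sup>+v. ennreal (?e lv v) * indicator {L<..} v * ennreal (1 - g v) \<partial>lborel)" .
  define P2' where "P2' = (\<integral>\<^sup>+v. ennreal (?e lv v) * indicator {L<..} v * ennreal (1 - g v) \<partial>lborel)"
  define K where "K = (\<integral>\<^sup>+v. ennreal (?e lv v) * indicator {L<..} v * ennreal (g v) \<partial>lborel)"
  have sum: "P2' + K = ennreal (exp (- lv * L))"
  proof -
    have "P2' + K = (\<integral>\<^sup>+v. ennreal (?e lv v) * indicator {L<..} v * ennreal (1 - g v) + ennreal (?e lv v) * indicator {L<..} v * ennreal (g v) \<partial>lborel)"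
      unfolding P2'_def K_def g_def by (rule nn_integral_add[symmetric]) auto
    also have "\<dots> = (\<integral>\<^sup>+v. ennreal (?e lv v) * indicator {L<..} v \<partial>lborel)"
    proof (intro nn_integral_cong)
      fix v :: real
      show "ennreal (?e lv v) * indicator {L<..} v * ennreal (1 - g v) + ennreal (?e lv v) * indicator {L<..} v * ennreal (g v)
           = ennreal (?e lv v) * indicator {L<..} v"
      proof (cases "v > L")
        case True
        have "ennreal (1 - g v) + ennreal (g v) = ennreal ((1 - g v) + g v)"
          using g[OF True] by (intro ennreal_plus[symmetric]) auto
        then have "ennreal (1 - g v) + ennreal (g v) = 1" by simp
        then show ?thesis by (metis distrib_left mult.right_neutral)
      qed simp
    qed
    also have "\<dots> = ennreal (exp (- lv * L))" by (rule L1'[OF lv less_imp_le[OF L]])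
    finally show ?thesis .
  qed
  define a where "a = lv + lq * OP"
  define c where "c = lq * SP"
  have a: "a > 0" unfolding a_def using lv lq OP by (simp add: add_pos_nonneg)
  have c: "c > 0" unfolding c_def using lq SP by simp
  define J where "J = (\<integral>\<^sup>+v. ennreal (exp (- a * v) / (lw + c * v)) * indicator {L<..} v \<partial>lborel)"
  have KJ: "K = ennreal (lv * lw * exp (- lq * T)) * J"
  proof -
    have "K = (\<integral>\<^sup>+v. ennreal (lv * lw * exp (- lq * T)) * (ennreal (exp (- a * v) / (lw + c * v)) * indicator {L<..} v) \<partial>lborel)"
      unfolding K_def
    proof (intro nn_integral_cong)
      fix v :: real
      show "ennreal (?e lv v) * indicator {L<..} v * ennreal (g v) = ennreal (lv * lw * exp (- lq * T)) * (ennreal (exp (- a * v) / (lw + c * v)) * indicator {L<..} v)"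
      proof (cases "v > L")
        case True
        then have vp: "v > 0" using L by simp
        have den: "lw + c * v > 0" using lw c vp by (simp add: add_pos_pos)
        have "?e lv v * g v = lv * lw * exp (- lq * T) * (exp (- a * v) / (lw + c * v))"
          using vp den unfolding g_def a_def c_def
          by (simp add: exponential_density_def exp_add[symmetric] field_simps)
        moreover have "ennreal (?e lv v) * ennreal (g v) = ennreal (?e lv v * g v)"
          using g[OF True] by (intro ennreal_mult''[symmetric]) auto
        moreover have "ennreal (lv * lw * exp (- lq * T)) * ennreal (exp (- a * v) / (lw + c * v))
            = ennreal (lv * lw * exp (- lq * T) * (exp (- a * v) / (lw + c * v)))"
          using lv lw den by (intro ennreal_mult''[symmetric]) auto
        ultimately show ?thesis using True by (simp add: mult_ac)
      qed simp
    qed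
    also have "\<dots> = ennreal (lv * lw * exp (- lq * T)) * J"
      unfolding J_def by (rule nn_integral_cmult) measurable
    finally show ?thesis .
  qed
  have Jv: "enn2real J = - Ei (- (a * (L + lw / c))) * exp (a * lw / c) / c"
    unfolding J_def by (rule L3[OF a c lw less_imp_le[OF L]])
  have le1: "P2' \<le> ennreal (exp (- lv * L))" unfolding sum[symmetric] by simp
  have le2: "K \<le> ennreal (exp (- lv * L))" unfolding sum[symmetric] by simp
  have fin1: "P2' < top" using le1 by (simp add: ennreal_less_top order.strict_trans1 top.not_eq_extremum)
  have fin2: "K < top" using le2 by (simp add: ennreal_less_top order.strict_trans1 top.not_eq_extremum)
  have "enn2real P2' + enn2real K = exp (- lv * L)"
  proof -
    have "enn2real (P2' + K) = exp (- lv * L)" unfolding sum by simp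
    then show ?thesis using enn2real_plus[OF fin1 fin2] by simp
  qed
  then have P2v: "enn2real P2' = exp (- lv * L) - lv * lw * exp (- lq * T) * (- Ei (- (a * (L + lw / c))) * exp (a * lw / c) / c)"
    unfolding KJ enn2real_mult Jv using lv lw by simp
  have m1: "measure M {\<omega> \<in> space M. Q \<omega> < W \<omega> * ST + OT + T \<and> V \<omega> < L} = (1 - exp (- lv * L)) * C1"
  proof -
    have "exp (- lv * L) \<le> 1" using lv L by simp
    then show ?thesis unfolding e1 G[OF P D A1m] P1 enn2real_mult using C1 by simp
  qed
  have m2: "measure M {\<omega> \<in> space M. Q \<omega> < W \<omega> * V \<omega> * SP + V \<omega> * OP + T \<and> V \<omega> > L} = enn2real P2'"
    unfolding e2 G[OF P D A2m] P2 P2'_def ..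
  have mx': "- (lw + lq * L * SP) * (OP / SP + lv / (lq * SP)) = - (a * (L + lw / c))"
    unfolding a_def c_def using lq SP by (simp add: field_simps)
  have mx: "(lw + lq * L * SP) * (OP / SP + lv / (lq * SP)) = a * (L + lw / c)"
    unfolding a_def c_def using lq SP by (simp add: field_simps)
  have ex: "exp (- L * (lv + lq * OP) - lq * T + a * (L + lw / c)) = exp (- lq * T) * exp (a * lw / c)"
    unfolding a_def c_def using lq SP by (simp add: exp_add[symmetric] field_simps)
  show ?thesis
    unfolding m1 m2 P2v mx mx' ex C1_def
    using c unfolding c_def by (simp add: field_simps)
qed


theorem proposition2:
  fixes M :: "'a measure" and Q V W :: "'a \<Rightarrow> real"
    and lq lv lw \<beta> J G D PT dRb dRD \<tau> \<sigma>2 PR I \<psi> :: real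
  assumes "prob_space M"
    and "prob_space.indep_vars M (\<lambda>_. borel) (\<lambda>i::nat. [Q, V, W] ! i) {0, 1, 2}"
    and "distributed M lborel Q (exponential_density lq)"
    and "distributed M lborel V (exponential_density lv)"
    and "distributed M lborel W (exponential_density lw)"
    and "lq > 0" "lv > 0" "lw > 0"
    and "\<beta> > 0" "J \<ge> 0" "G \<ge> 0" "D > 0" "PT > 0" "dRb > 0" "dRD > 0" "\<tau> > 0"
    and "\<sigma>2 > 0" "PR > 0" "I > 0" "\<psi> > 0" "\<beta> - J * \<psi> > 0"
  shows "let S = (\<lambda>l. D * PT * \<psi> / (l * (\<beta> - J * \<psi>)));
             Oc = (\<lambda>l. dRb powr \<tau> * \<sigma>2 * \<psi> / (l * (\<beta> - J * \<psi>)));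
             S\<Theta> = S PR; O\<Theta> = Oc PR;
             S\<Phi> = S (I * dRD powr \<tau>); O\<Phi> = Oc (I * dRD powr \<tau>);
             T = G * \<psi> / (\<beta> - J * \<psi>);
             \<Lambda> = I * dRD powr \<tau> / PR;
             \<mu> = lw + lq * \<Lambda> * S\<Phi>;
             \<xi> = O\<Phi> / S\<Phi> + lv / (lq * S\<Phi>);
             F = measure M {\<omega> \<in> space M. Q \<omega> < W \<omega> * S\<Theta> + O\<Theta> + T \<and> V \<omega> < \<Lambda>}
               + measure M {\<omega> \<in> space M. Q \<omega> < W \<omega> * V \<omega> * S\<Phi> + V \<omega> * O\<Phi> + T \<and> V \<omega> > \<Lambda>}
         in F = 1 - lw * exp (- lq * (O\<Theta> + T)) / (lw + lq * S\<Theta>) * (1 - exp (- lv * \<Lambda>))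
                + lv * lw * Ei (- \<mu> * \<xi>) / (lq * S\<Phi>)
                  * exp (- \<Lambda> * (lv + lq * O\<Phi>) - lq * T + \<mu> * \<xi>)"
proof -
  have p1: "dRb powr \<tau> > 0" using assms(14) by simp
  have p2: "dRD powr \<tau> > 0" using assms(15) by simp
  have p3: "I * dRD powr \<tau> > 0" using assms(19) p2 by simp
  show ?thesis unfolding Let_def
  proof (rule core[OF assms(1-8)])
    show "D * PT * \<psi> / (PR * (\<beta> - J * \<psi>)) > 0" using assms by (intro divide_pos_pos mult_pos_pos) auto
    show "dRb powr \<tau> * \<sigma>2 * \<psi> / (PR * (\<beta> - J * \<psi>)) \<ge> 0" using assms p1 by (intro divide_nonneg_pos mult_nonneg_nonneg mult_pos_pos) auto
    show "D * PT * \<psi> / (I * dRD powr \<tau> * (\<beta> - J * \<psi>)) > 0" using assms p3 by (intro divide_pos_pos mult_pos_pos) auto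
    show "dRb powr \<tau> * \<sigma>2 * \<psi> / (I * dRD powr \<tau> * (\<beta> - J * \<psi>)) \<ge> 0" using assms p1 p3 by (intro divide_nonneg_pos mult_nonneg_nonneg mult_pos_pos) auto
    show "G * \<psi> / (\<beta> - J * \<psi>) \<ge> 0" using assms by (intro divide_nonneg_pos mult_nonneg_nonneg) auto
    show "I * dRD powr \<tau> / PR > 0" using assms p3 by (intro divide_pos_pos) auto
  qed
qed

end
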